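(* Let $n$ be a positive integer and $p$ an odd prime. If $n$ is divisible by $4$, then the lists \[ \binom{n}{0}, \binom{n}{2}, \ldots, \binom{n}{n/2-2} \quad\text{and}\quad \binom{n}{1}, \binom{n}{3}, \ldots, \binom{n}{n/2-1} \] have the same number of elements divisible by $p$. If $n \equiv 2 \bmod 4$, then the lists \[ \binom{n}{0}, \binom{n}{2}, \ldots, \binom{n}{n/2-1} \quad\text{and}\quad \binom{n}{1}, \binom{n}{3}, \ldots, \binom{n}{n/2-2}, \binom{n}{n/2} \] have the same number of elements divisible by $p$. *)

theory Defs
  imports Main "HOL-Computational_Algebra.Primes"
begin

end

theory Submission
  imports Defs
begin

definition LL :: "nat \<Rightarrow> nat \<Rightarrow> nat \<Rightarrow> nat" where
 "LL p n k = (n div p choose k div p) * (n mod p choose k mod p)"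

lemma not_dvd_small_choose:
  assumes "prime p" "r < p" shows "p dvd (r choose t) \<longleftrightarrow> t > r"
proof
  assume h: "p dvd (r choose t)"
  show "t > r"
  proof (rule ccontr)
    assume "\<not> t > r" hence "t \<le> r" by simp
    hence "(fact r::nat) = fact t * fact (r-t) * (r choose t)"
      using binomial_fact_lemma by auto
    hence "p dvd fact r" using h by (metis dvd_mult)
    thus False using assms prime_dvd_fact_iff by auto
  qed
qed (simp add: binomial_eq_0)

lemma L_step:
  assumes "prime p"
  shows "LL p (Suc n) (Suc k) mod p = (LL p n k + LL p n (Suc k)) mod p"
proof -
  have p1: "p > 1" using assms prime_gt_1_nat by blast
  define Q r K t where "Q = n div p" "r = n mod p" "K = k div p" "t = k mod p"
  have rp: "r < p" "t < p" using p1 Q_r_K_t_def by auto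
  show ?thesis
  proof (cases "Suc r = p")
    case False
    hence n1: "Suc n mod p = Suc r" "Suc n div p = Q"
      using Q_r_K_t_def mod_Suc[of n p] div_Suc[of n p] by auto
    show ?thesis
    proof (cases "Suc t = p")
      case False
      hence k1: "Suc k mod p = Suc t" "Suc k div p = K"
        using Q_r_K_t_def mod_Suc[of k p] div_Suc[of k p] by auto
      show ?thesis unfolding LL_def n1 k1 Q_r_K_t_def[symmetric]
        by (simp add: algebra_simps)
    next
      case True
      hence k1: "Suc k mod p = 0" "Suc k div p = Suc K"
        using Q_r_K_t_def mod_Suc[of k p] div_Suc[of k p] by auto
      have "r choose t = 0" using True False rp by simp
      then show ?thesis unfolding LL_def n1 k1 Q_r_K_t_def[symmetric]
        by (simp add: binomial_eq_0)
    qed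
  next
    case True
    hence n1: "Suc n mod p = 0" "Suc n div p = Suc Q"
      using Q_r_K_t_def mod_Suc[of n p] div_Suc[of n p] by auto
    show ?thesis
    proof (cases "Suc t = p")
      case False
      hence k1: "Suc k mod p = Suc t" "Suc k div p = K"
        using Q_r_K_t_def mod_Suc[of k p] div_Suc[of k p] by auto
      have "(r choose t) + (r choose Suc t) = p choose Suc t" unfolding True[symmetric] by simp
      moreover have "p dvd (p choose Suc t)"
        using dvd_choose_prime[of "Suc t" p] False rp assms by simp
      ultimately have "p dvd (Q choose K) * (r choose t) + (Q choose K) * (r choose Suc t)"
        by (metis add_mult_distrib2 dvd_mult)
      then show ?thesis unfolding LL_def n1 k1 Q_r_K_t_def[symmetric]
        by simp
    next
      case True
      hence k1: "Suc k mod p = 0" "Suc k div p = Suc K"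
        using Q_r_K_t_def mod_Suc[of k p] div_Suc[of k p] by auto
      have "r = t" using True \<open>Suc r = p\<close> by simp
      hence rt: "r choose t = 1" by simp
      show ?thesis unfolding LL_def n1 k1 Q_r_K_t_def[symmetric] rt
        by simp
    qed
  qed
qed

lemma lucas:
  assumes "prime p"
  shows "(n choose k) mod p = LL p n k mod p"
proof (induction n arbitrary: k)
  case 0
  have p1: "p > 1" using assms prime_gt_1_nat by blast
  show ?case
  proof (cases k)
    case 0 then show ?thesis by (simp add: LL_def)
  next
    case (Suc j)
    have "k div p \<noteq> 0 \<or> k mod p \<noteq> 0"
    proof (rule ccontr)
      assume "\<not> (k div p \<noteq> 0 \<or> k mod p \<noteq> 0)"
      hence z: "k div p = 0" "k mod p = 0" by simp_all
      have "k = p * (k div p) + k mod p" by simp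
      hence "k = 0" using z by simp
      thus False using Suc by simp
    qed
    then show ?thesis using Suc by (auto simp: LL_def binomial_eq_0)
  qed
next
  case (Suc n)
  show ?case
  proof (cases k)
    case 0 then show ?thesis by (simp add: LL_def)
  next
    case (Suc j)
    have "(Suc n choose Suc j) mod p = ((n choose j) + (n choose Suc j)) mod p" by simp
    also have "\<dots> = (LL p n j + LL p n (Suc j)) mod p"
      by (rule mod_add_cong) (rule Suc.IH)+
    also have "\<dots> = LL p (Suc n) (Suc j) mod p" using L_step[OF assms] by simp
    finally show ?thesis using Suc by simp
  qed
qed

definition sg :: "nat \<Rightarrow> nat \<Rightarrow> int" where
  "sg p n = (\<Sum>k\<le>n. if p dvd (n choose k) then 0 else (-1)^k)"

lemma sg_ext:
  assumes "n < M"
  shows "sg p n = (\<Sum>k<M. if p dvd (n choose k) then 0 else (-1::int)^k)"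
  unfolding sg_def
proof (rule sum.mono_neutral_left)
  show "finite {..<M}" by simp
  show "{..n} \<subseteq> {..<M}" using assms by auto
  show "\<forall>i\<in>{..<M} - {..n}. (if p dvd (n choose i) then 0 else (- 1::int) ^ i) = 0"
    by (auto simp: binomial_eq_0)
qed

lemma sum_split_add: "(\<Sum>k<a+b. f k) = (\<Sum>k<a. f k) + (\<Sum>t<b. f (a+t::nat)::int)"
  by (induction b) auto

lemma block: "(\<Sum>k<p*m. f k) = (\<Sum>s<m. \<Sum>t<p. f (p*s+t::nat)::int)"
proof (induction m)
  case 0 then show ?case by simp
next
  case (Suc m)
  have "(\<Sum>k<p*Suc m. f k) = (\<Sum>k<p*m+p. f k)" by (simp add: algebra_simps)
  also have "\<dots> = (\<Sum>k<p*m. f k) + (\<Sum>t<p. f (p*m+t))" by (rule sum_split_add)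
  finally show ?case using Suc by simp
qed

lemma alt: "(\<Sum>t\<le>r. (-1::int)^t) = (if even r then 1 else 0)"
  by (induction r) auto

lemma divmod_helper: "Y < (p::nat) \<Longrightarrow> (p*X+Y) div p = X \<and> (p*X+Y) mod p = Y"
  by simp

lemma lucas_dvd:
  assumes "prime p" "t < p"
  shows "p dvd (n choose (p*s+t)) \<longleftrightarrow> p dvd ((n div p) choose s) \<or> t > n mod p"
proof -
  have p1: "p > 1" using assms prime_gt_1_nat by blast
  have "p dvd (n choose (p*s+t)) \<longleftrightarrow> p dvd LL p n (p*s+t)"
    using lucas[OF assms(1), of n "p*s+t"] by (simp add: dvd_eq_mod_eq_0)
  also have "LL p n (p*s+t) = ((n div p) choose s) * ((n mod p) choose t)"
    unfolding LL_def using divmod_helper[OF assms(2), of s] by simp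
  also have "p dvd \<dots> \<longleftrightarrow> p dvd ((n div p) choose s) \<or> p dvd ((n mod p) choose t)"
    using assms(1) prime_dvd_mult_iff by blast
  also have "p dvd ((n mod p) choose t) \<longleftrightarrow> t > n mod p"
    using not_dvd_small_choose[OF assms(1)] p1 by simp
  finally show ?thesis .
qed

lemma sg_rec:
  assumes "prime p" "odd p"
  shows "sg p n = sg p (n div p) * (if even (n mod p) then 1 else 0)"
proof -
  have p1: "p > 1" using assms prime_gt_1_nat by blast
  define Q r where "Q = n div p" "r = n mod p"
  have rp: "r < p" using p1 Q_r_def by simp
  have nQ: "n = p*Q + r" using Q_r_def by simp
  define F where "F k = (if p dvd (n choose k) then 0 else (-1::int)^k)" for k
  define G where "G s = (if p dvd (Q choose s) then 0 else (-1::int)^s)" for s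
  define H where "H t = (if t \<le> r then (-1::int)^t else 0)" for t
  have key: "F (p*s+t) = G s * H t" if "t < p" for s t
  proof -
    have e: "((-1::int)^(p*s+t)) = (-1)^s * (-1)^t"
      using assms(2) by (simp add: power_add power_mult)
    show ?thesis
      unfolding F_def G_def H_def e
      using lucas_dvd[OF assms(1) that, of n s] Q_r_def by auto
  qed
  have "sg p n = (\<Sum>k<p*Suc Q. F k)"
    unfolding F_def by (rule sg_ext) (use nQ rp in simp)
  also have "\<dots> = (\<Sum>s<Suc Q. \<Sum>t<p. F (p*s+t))" by (rule block)
  also have "\<dots> = (\<Sum>s<Suc Q. \<Sum>t<p. G s * H t)"
    using key by simp
  also have "\<dots> = (\<Sum>s<Suc Q. G s) * (\<Sum>t<p. H t)"
    by (rule sum_product[symmetric])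
  also have "(\<Sum>s<Suc Q. G s) = sg p Q"
    unfolding sg_def G_def lessThan_Suc_atMost ..
  also have "(\<Sum>t<p. H t) = (\<Sum>t\<le>r. H t)"
  proof (rule sum.mono_neutral_right)
    show "finite {..<p}" by simp
    show "{..r} \<subseteq> {..<p}" using rp by auto
    show "\<forall>i\<in>{..<p} - {..r}. H i = 0" by (auto simp: H_def)
  qed
  also have "\<dots> = (\<Sum>t\<le>r. (-1::int)^t)" by (rule sum.cong) (auto simp: H_def)
  also have "\<dots> = (if even r then 1 else 0)" by (rule alt)
  finally show ?thesis using Q_r_def by simp
qed

lemma sg_even:
  assumes "prime p" "odd p"
  shows "sg p (2*m) = (if p dvd ((2*m) choose m) then 0 else 1)"
proof (induction m rule: less_induct)
  case (less m)
  have p1: "p > 1" using assms prime_gt_1_nat by blast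
  show ?case
  proof (cases "m = 0")
    case True
    then show ?thesis using p1 by (simp add: sg_def)
  next
    case False
    define a b where "a = m div p" "b = m mod p"
    have am: "a < m" using False p1 a_b_def by simp
    have bp: "b < p" using p1 a_b_def by simp
    have mab: "m = p*a + b" using a_b_def by simp
    show ?thesis
    proof (cases "2*b < p")
      case True
      have e: "2*m = p*(2*a) + 2*b" using mab by simp
      have d: "(2*m) div p = 2*a" "(2*m) mod p = 2*b"
        using divmod_helper[OF True, of "2*a"] e by auto
      have "sg p (2*m) = sg p (2*a)" using sg_rec[OF assms, of "2*m"] d by simp
      also have "\<dots> = (if p dvd ((2*a) choose a) then 0 else 1)" using less am by blast
      also have "p dvd ((2*a) choose a) \<longleftrightarrow> p dvd ((2*m) choose m)"
        using lucas_dvd[OF assms(1) bp, of "2*m" a] mab d by simp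
      finally show ?thesis .
    next
      case False
      have e: "2*m = p*(2*a+1) + (2*b-p)" using mab False by (simp add: algebra_simps)
      have lt: "2*b - p < p" using bp by simp
      have d: "(2*m) div p = 2*a+1" "(2*m) mod p = 2*b-p"
        using divmod_helper[OF lt, of "2*a+1"] e by auto
      have od: "odd (2*b - p)" using False assms(2) by simp
      have "sg p (2*m) = 0" using sg_rec[OF assms, of "2*m"] d od by simp
      moreover have "2*b - p < b" using bp False by simp
      hence "p dvd ((2*m) choose m)"
        using lucas_dvd[OF assms(1) bp, of "2*m" a] mab d by simp
      ultimately show ?thesis by simp
    qed
  qed
qed

lemma signed_total:
  assumes "prime p" "odd p"
  shows "(\<Sum>k\<le>2*m. if p dvd ((2*m) choose k) then (-1::int)^k else 0)
         = (if p dvd ((2*m) choose m) then 1 else 0)"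
proof -
  have "(\<Sum>k\<le>2*m. if p dvd ((2*m) choose k) then (-1::int)^k else 0) + sg p (2*m)
        = (\<Sum>k\<le>2*m. (-1::int)^k)"
    unfolding sg_def sum.distrib[symmetric] by (rule sum.cong) auto
  also have "\<dots> = 1" by (simp add: alt)
  finally show ?thesis using sg_even[OF assms, of m] by (auto split: if_splits)
qed

lemma symm_split:
  fixes F :: "nat \<Rightarrow> int"
  assumes "\<And>k. k \<le> 2*m \<Longrightarrow> F (2*m - k) = F k"
  shows "(\<Sum>k\<le>2*m. F k) = 2 * (\<Sum>k<m. F k) + F m"
proof -
  have u: "{..2*m} = {..m} \<union> {m<..2*m}" by auto
  have "(\<Sum>k\<le>2*m. F k) = (\<Sum>k\<le>m. F k) + (\<Sum>k\<in>{m<..2*m}. F k)"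
    unfolding u by (rule sum.union_disjoint) auto
  also have "(\<Sum>k\<in>{m<..2*m}. F k) = (\<Sum>k<m. F (2*m - k))"
    by (rule sum.reindex_bij_witness[where i="\<lambda>k. 2*m - k" and j="\<lambda>k. 2*m - k"]) auto
  also have "\<dots> = (\<Sum>k<m. F k)" by (rule sum.cong) (auto intro: assms)
  also have "(\<Sum>k\<le>m. F k) = (\<Sum>k<m. F k) + F m" by (simp add: lessThan_Suc_atMost[symmetric])
  finally show ?thesis by simp
qed

lemma count_split:
  "(\<Sum>k<m. if P k then (-1::int)^k else 0)
   = int (card {k. even k \<and> k < m \<and> P k}) - int (card {k. odd k \<and> k < m \<and> P k})"
proof -
  have "(\<Sum>k<m. if P k then (-1::int)^k else 0)
        = (\<Sum>k<m. of_bool (even k \<and> P k) - of_bool (odd k \<and> P k))"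
    by (rule sum.cong) auto
  also have "\<dots> = (\<Sum>k<m. of_bool (even k \<and> P k)) - (\<Sum>k<m. of_bool (odd k \<and> P k))"
    by (rule sum_subtractf)
  moreover have "{..<m} \<inter> {k. even k \<and> P k} = {k. even k \<and> k < m \<and> P k}" by auto
  moreover have "{..<m} \<inter> {k. odd k \<and> P k} = {k. odd k \<and> k < m \<and> P k}" by auto
  ultimately show ?thesis by simp
qed

theorem lemma1p2:
  fixes n p :: nat
  assumes "n > 0" and "prime p" and "odd p"
  shows "(4 dvd n \<longrightarrow>
            card {k. even k \<and> k \<le> n div 2 - 2 \<and> p dvd (n choose k)}
          = card {k. odd k \<and> k \<le> n div 2 - 1 \<and> p dvd (n choose k)})
       \<and> (n mod 4 = 2 \<longrightarrow>
            card {k. even k \<and> k \<le> n div 2 - 1 \<and> p dvd (n choose k)}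
          = card {k. odd k \<and> k \<le> n div 2 \<and> p dvd (n choose k)})"
proof -
  define F where "F k = (if p dvd (n choose k) then (-1::int)^k else 0)" for k
  define m where "m = n div 2"
  define Ev where "Ev = {k. even k \<and> k < m \<and> p dvd (n choose k)}"
  define Od where "Od = {k. odd k \<and> k < m \<and> p dvd (n choose k)}"
  have fin: "finite Od" unfolding Od_def by auto
  have A: "(\<Sum>k<m. F k) = int (card Ev) - int (card Od)"
    unfolding F_def Ev_def Od_def by (rule count_split)
  show ?thesis
  proof (intro conjI impI)
    assume h: "4 dvd n"
    then have nm: "n = 2*m" and me: "even m" and m2: "m \<ge> 2" using assms(1) unfolding m_def
      by (auto elim!: dvdE)
    have sym: "F (2*m - k) = F k" if "k \<le> 2*m" for k
    proof -
      have "even (2*m - k) = even k" using that by auto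
      then have "(-1::int)^(2*m-k) = (-1)^k" by (simp add: minus_one_power_iff)
      moreover have "n choose (2*m - k) = n choose k" using that nm binomial_symmetric by metis
      ultimately show ?thesis unfolding F_def by simp
    qed
    have "2 * (\<Sum>k<m. F k) + F m = (if p dvd (n choose m) then 1 else 0)"
      using symm_split[of m F, OF sym] signed_total[OF assms(2,3), of m] nm
      unfolding F_def by simp
    then have "(\<Sum>k<m. F k) = 0" using me by (auto simp: F_def split: if_splits)
    then have "card Ev = card Od" using A by simp
    moreover have "{k. even k \<and> k \<le> n div 2 - 2 \<and> p dvd (n choose k)} = Ev"
      unfolding Ev_def m_def[symmetric] using me m2 by (auto elim!: evenE)
    moreover have "{k. odd k \<and> k \<le> n div 2 - 1 \<and> p dvd (n choose k)} = Od"
      unfolding Od_def m_def[symmetric] using m2 by auto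
    ultimately show "card {k. even k \<and> k \<le> n div 2 - 2 \<and> p dvd (n choose k)}
          = card {k. odd k \<and> k \<le> n div 2 - 1 \<and> p dvd (n choose k)}" by simp
  next
    assume h: "n mod 4 = 2"
    then have nm: "n = 2*m" and mo: "odd m" unfolding m_def by presburger+
    have m1: "m \<ge> 1" using mo by (cases m) auto
    have sym: "F (2*m - k) = F k" if "k \<le> 2*m" for k
    proof -
      have "even (2*m - k) = even k" using that by auto
      then have "(-1::int)^(2*m-k) = (-1)^k" by (simp add: minus_one_power_iff)
      moreover have "n choose (2*m - k) = n choose k" using that nm binomial_symmetric by metis
      ultimately show ?thesis unfolding F_def by simp
    qed
    have "2 * (\<Sum>k<m. F k) + F m = (if p dvd (n choose m) then 1 else 0)"
      using symm_split[of m F, OF sym] signed_total[OF assms(2,3), of m] nm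
      unfolding F_def by simp
    then have S: "(\<Sum>k<m. F k) = (if p dvd (n choose m) then 1 else 0)"
      using mo by (auto simp: F_def split: if_splits)
    have e1: "{k. even k \<and> k \<le> n div 2 - 1 \<and> p dvd (n choose k)} = Ev"
      unfolding Ev_def m_def[symmetric] using m1 mo by (auto elim!: oddE)
    have o1: "{k. odd k \<and> k \<le> n div 2 \<and> p dvd (n choose k)}
           = Od \<union> (if p dvd (n choose m) then {m} else {})"
      unfolding Od_def m_def[symmetric] using mo by (auto simp: le_less)
    have "card (Od \<union> (if p dvd (n choose m) then {m} else {}))
          = card Od + (if p dvd (n choose m) then 1 else 0)"
      using fin by (auto simp: Od_def)
    then show "card {k. even k \<and> k \<le> n div 2 - 1 \<and> p dvd (n choose k)}
          = card {k. odd k \<and> k \<le> n div 2 \<and> p dvd (n choose k)}"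
      unfolding e1 o1 using A S by (auto split: if_splits)
  qed
qed

end
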